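(* Let $\Omega\subset\mathbb{R}^d$ ($d=2,3$) be a bounded convex polygonal/polyhedral domain, $\mathcal{T}_h$ a mesh of $\Omega$ from a quasi-uniform family with mesh size $h$, and $\mathcal{E}_h$ the set of all edges/faces of elements of $\mathcal{T}_h$. Let $\mathbf{N}_h$ be a space of face-wise normal vector fields as described in the context, and assume that $\mu\mathbf{n}\in\mathbf{N}_h$ for every edge-wise constant function $\mu\in P_0(\mathcal{E}_h)$. Then there exists a positive constant $C$, independent of $h$, such that for all $\overline{w}\in P_0(\mathcal{T}_h)$, \[ C\,\|[\![\overline{w}]\!]\|_{\mathcal{E}_h}\le \sup_{\mathbf{r}\in\mathbf{N}_h,\ \mathbf{r}\cdot\mathbf{n}\neq 0}\frac{\langle \mathbf{r}\cdot\mathbf{n},\overline{w}\rangle_{\partial\mathcal{T}_h}}{\|\mathbf{r}\cdot\mathbf{n}\|_{\partial\mathcal{T}_h}}. \]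
   Context: $P_0(\mathcal{T}_h)$ denotes element-wise constant functions and $P_0(\mathcal{E}_h)$ edge/face-wise constant functions on the skeleton. For each face $e\in\mathcal{E}_h$ with unit normal $\mathbf{n}$, $\mathbf{N}(e)$ is a finite-dimensional space of vector fields $\mathbf{r}\in L^2(e)^d$ with $(I-\mathbf{n}\otimes\mathbf{n})\mathbf{r}=0$ (purely normal fields), and $\mathbf{N}_h=\{\mathbf{r}\in L^2(\bigcup_{e\in\mathcal{E}_h}e)^d:\mathbf{r}|_e\in\mathbf{N}(e)\ \forall e\in\mathcal{E}_h\}$ (single-valued on each face). For functions on element boundaries, $\langle a,b\rangle_{\partial\mathcal{T}_h}=\sum_{K\in\mathcal{T}_h}\int_{\partial K}ab\,ds$, where on $\partial K$ the trace from $K$ is used and $\mathbf{n}$ is the unit outward normal to $K$; $\|a\|_{\partial\mathcal{T}_h}^2=\langle a,a\rangle_{\partial\mathcal{T}_h}$. For $\overline{w}\in P_0(\mathcal{T}_h)$ the jump is the vector field on the skeleton given by $[\![\overline{w}]\!]=\overline{w}|_{K^+}\mathbf{n}^++\overline{w}|_{K^-}\mathbf{n}^-$ on an interior face $e=\partial K^+\cap\partial K^-$ ($\mathbf{n}^\pm$ the outward normals of $K^\pm$) and $[\![\overline{w}]\!]=\overline{w}\mathbf{n}$ on a boundary face; $\|\mathbf{r}\|_{\mathcal{E}_h}^2=\sum_{e\in\mathcal{E}_h}\int_e|\mathbf{r}|^2ds$. *)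

theory Defs
  imports "HOL-Analysis.Analysis"
begin

definition is_mesh :: "'a::euclidean_space set \<Rightarrow> 'a set set \<Rightarrow> bool" where
  "is_mesh \<Omega> T \<longleftrightarrow> finite T \<and> T \<noteq> {} \<and>
     (\<forall>K\<in>T. int DIM('a) simplex K) \<and> \<Union>T = \<Omega> \<and>
     (\<forall>K\<in>T. \<forall>K'\<in>T. K \<noteq> K' \<longrightarrow>
        interior K \<inter> interior K' = {} \<and> (K \<inter> K') face_of K \<and> (K \<inter> K') face_of K')"

definition meshsize :: "'a::euclidean_space set set \<Rightarrow> real" where
  "meshsize T = Max (diameter ` T)"

definition quasi_uniform_family :: "'a::euclidean_space set \<Rightarrow> 'a set set set \<Rightarrow> bool" where
  "quasi_uniform_family \<Omega> F \<longleftrightarrow> (\<forall>T\<in>F. is_mesh \<Omega> T) \<and>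
     (\<exists>\<rho>>0. \<forall>T\<in>F. \<forall>K\<in>T. \<exists>x. ball x (\<rho> * meshsize T) \<subseteq> K)"

definition mesh_faces :: "'a::euclidean_space set set \<Rightarrow> 'a set set" where
  "mesh_faces T = {e. \<exists>K\<in>T. e facet_of K}"

definition outer_normal :: "'a::euclidean_space set \<Rightarrow> 'a set \<Rightarrow> 'a" where
  "outer_normal K e = (SOME n. norm n = 1 \<and>
      (\<exists>c. (\<forall>x\<in>e. n \<bullet> x = c) \<and> (\<forall>x\<in>K. n \<bullet> x \<le> c)))"

definition face_normal :: "'a::euclidean_space set \<Rightarrow> 'a" where
  "face_normal e = (SOME n. norm n = 1 \<and> (\<exists>c. \<forall>x\<in>e. n \<bullet> x = c))"

text \<open>The (d-1)-dimensional surface measure on a flat face e is the push-forward of Lebesgue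
  measure on the right prism of height one over e under orthogonal projection onto the
  hyperplane of e (Cavalieri's principle).\<close>
definition face_prism :: "'a::euclidean_space set \<Rightarrow> 'a set" where
  "face_prism e = {x + t *\<^sub>R face_normal e | x t. x \<in> e \<and> t \<in> {0..1}}"

definition face_proj :: "'a::euclidean_space set \<Rightarrow> 'a \<Rightarrow> 'a" where
  "face_proj e y = y - ((y - (SOME x. x \<in> e)) \<bullet> face_normal e) *\<^sub>R face_normal e"

definition surf :: "'a::euclidean_space set \<Rightarrow> 'a measure" where
  "surf e = distr (lebesgue_on (face_prism e)) borel (face_proj e)"

text \<open>N_h is represented by the family N; an element r of N_h
  is a face-indexed family with r e in N(e) (single-valued on each face).\<close>
definition normal_spaces :: "'a::euclidean_space set set \<Rightarrow> ('a set \<Rightarrow> ('a \<Rightarrow> 'a) set) \<Rightarrow> bool" where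
  "normal_spaces T N \<longleftrightarrow> (\<forall>e\<in>mesh_faces T.
     (\<exists>B. finite B \<and> N e = range (\<lambda>c. \<lambda>x. \<Sum>b\<in>B. c b *\<^sub>R b x)) \<and>
     (\<forall>r\<in>N e. r \<in> borel_measurable (surf e) \<and> integrable (surf e) (\<lambda>x. (norm (r x))\<^sup>2) \<and>
        (\<forall>x\<in>e. r x = (r x \<bullet> face_normal e) *\<^sub>R face_normal e)))"

definition Nh :: "'a::euclidean_space set set \<Rightarrow> ('a set \<Rightarrow> ('a \<Rightarrow> 'a) set) \<Rightarrow> ('a set \<Rightarrow> 'a \<Rightarrow> 'a) set" where
  "Nh T N = {r. \<forall>e\<in>mesh_faces T. r e \<in> N e}"

definition bdry_pair :: "'a::euclidean_space set set \<Rightarrow> ('a set \<Rightarrow> 'a \<Rightarrow> 'a) \<Rightarrow> ('a set \<Rightarrow> real) \<Rightarrow> real" where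
  "bdry_pair T r w = (\<Sum>K\<in>T. \<Sum>e\<in>{e. e facet_of K}.
      \<integral>x. (r e x \<bullet> outer_normal K e) * w K \<partial>surf e)"

definition bdry_norm :: "'a::euclidean_space set set \<Rightarrow> ('a set \<Rightarrow> 'a \<Rightarrow> 'a) \<Rightarrow> real" where
  "bdry_norm T r = sqrt (\<Sum>K\<in>T. \<Sum>e\<in>{e. e facet_of K}.
      \<integral>x. (r e x \<bullet> outer_normal K e)\<^sup>2 \<partial>surf e)"

definition jump :: "'a::euclidean_space set set \<Rightarrow> ('a set \<Rightarrow> real) \<Rightarrow> 'a set \<Rightarrow> 'a" where
  "jump T w e = (\<Sum>K\<in>{K\<in>T. e facet_of K}. w K *\<^sub>R outer_normal K e)"

definition jump_norm :: "'a::euclidean_space set set \<Rightarrow> ('a set \<Rightarrow> real) \<Rightarrow> real" where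
  "jump_norm T w = sqrt (\<Sum>e\<in>mesh_faces T. \<integral>x. (norm (jump T w e))\<^sup>2 \<partial>surf e)"

end

theory Submission
  imports Defs
begin


lemma facet_hyperplane:
  fixes K e :: "'a::euclidean_space set"
  assumes "int DIM('a) simplex K" "e facet_of K"
  shows "\<exists>a b. a \<noteq> 0 \<and> affine hull e = {x. a \<bullet> x = b}"
proof -
  have "aff_dim K = int DIM('a)" using aff_dim_simplex[OF assms(1)] .
  then have "aff_dim e = int DIM('a) - 1" using assms(2) by (simp add: facet_of_def)
  then show ?thesis using aff_dim_eq_hyperplane[of e] by simp
qed

lemma normal_parallel:
  fixes a n :: "'a::euclidean_space"
  assumes "a \<noteq> 0" "affine hull e = {x. a \<bullet> x = b}" "x0 \<in> e" "\<forall>x\<in>e. n \<bullet> x = c"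
  shows "n = ((n \<bullet> a) / (a \<bullet> a)) *\<^sub>R a"
proof -
  define k where "k = (n \<bullet> a) / (a \<bullet> a)"
  define v where "v = n - k *\<^sub>R a"
  have aa: "a \<bullet> a \<noteq> 0" using assms(1) by simp
  have va: "v \<bullet> a = 0" unfolding v_def k_def using aa by (simp add: inner_diff_left)
  have "e \<subseteq> {x. n \<bullet> x = c}" using assms(4) by auto
  then have "affine hull e \<subseteq> {x. n \<bullet> x = c}"
    by (intro hull_minimal) (auto simp: affine_hyperplane)
  moreover have "x0 + v \<in> affine hull e" "x0 \<in> affine hull e"
    using assms(2,3) hull_subset[of e affine] va by (auto simp: inner_add_right inner_commute)
  ultimately have "n \<bullet> (x0 + v) = c" "n \<bullet> x0 = c" by auto
  then have nv: "n \<bullet> v = 0" by (simp add: inner_add_right)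
  have "v \<bullet> v = n \<bullet> v - k * (a \<bullet> v)" unfolding v_def by (simp add: inner_diff_left)
  also have "\<dots> = 0" using nv va by (simp add: inner_commute)
  finally have "v = 0" by simp
  then show ?thesis unfolding v_def k_def by simp
qed

lemma unit_normals_pm:
  fixes K e :: "'a::euclidean_space set"
  assumes "int DIM('a) simplex K" "e facet_of K"
    and "norm n = 1" "\<forall>x\<in>e. n \<bullet> x = c" "norm n' = 1" "\<forall>x\<in>e. n' \<bullet> x = c'"
  shows "n' = n \<or> n' = - n"
proof -
  obtain a b where ab: "a \<noteq> 0" "affine hull e = {x. a \<bullet> x = b}"
    using facet_hyperplane[OF assms(1,2)] by blast
  obtain x0 where x0: "x0 \<in> e" using assms(2) by (auto simp: facet_of_def)
  define k where "k = (n \<bullet> a) / (a \<bullet> a)"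
  define k' where "k' = (n' \<bullet> a) / (a \<bullet> a)"
  have n: "n = k *\<^sub>R a" unfolding k_def by (rule normal_parallel[OF ab x0 assms(4)])
  have n': "n' = k' *\<^sub>R a" unfolding k'_def by (rule normal_parallel[OF ab x0 assms(6)])
  have "\<bar>k\<bar> * norm a = \<bar>k'\<bar> * norm a" using assms(3,5) n n' by simp
  then have "\<bar>k\<bar> = \<bar>k'\<bar>" using ab(1) by simp
  then have "k' = k \<or> k' = - k" by linarith
  then show ?thesis using n n' by auto
qed

lemma face_normal_props:
  fixes K e :: "'a::euclidean_space set"
  assumes "int DIM('a) simplex K" "e facet_of K"
  shows "norm (face_normal e) = 1 \<and> (\<exists>c. \<forall>x\<in>e. face_normal e \<bullet> x = c)"
proof -
  obtain a b where ab: "a \<noteq> 0" "affine hull e = {x. a \<bullet> x = b}"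
    using facet_hyperplane[OF assms(1,2)] by blast
  have "norm (a /\<^sub>R norm a) = 1 \<and> (\<exists>c. \<forall>x\<in>e. (a /\<^sub>R norm a) \<bullet> x = c)"
    using ab hull_subset[of e affine] by (auto intro!: exI[of _ "b / norm a"] simp: divide_inverse mult.commute)
  then show ?thesis unfolding face_normal_def by (rule someI)
qed

lemma outer_normal_props:
  fixes K e :: "'a::euclidean_space set"
  assumes "int DIM('a) simplex K" "e facet_of K"
  shows "norm (outer_normal K e) = 1 \<and>
      (\<exists>c. (\<forall>x\<in>e. outer_normal K e \<bullet> x = c) \<and> (\<forall>x\<in>K. outer_normal K e \<bullet> x \<le> c))"
proof -
  have "polyhedron K" using simplex_imp_polyhedron[OF assms(1)] .
  moreover have "e face_of K" using assms(2) by (simp add: facet_of_def)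
  ultimately have "e exposed_face_of K" using exposed_face_of_polyhedron by blast
  then obtain a b where ab: "K \<subseteq> {x. a \<bullet> x \<le> b}" "e = K \<inter> {x. a \<bullet> x = b}"
    by (auto simp: exposed_face_of_def)
  have "a \<noteq> 0"
  proof
    assume "a = 0"
    obtain x0 where "x0 \<in> e" using assms(2) by (auto simp: facet_of_def)
    then have "b = 0" using ab \<open>a = 0\<close> by (auto split: if_splits)
    then have "e = K" using ab \<open>a = 0\<close> by auto
    then show False using assms(2) by simp
  qed
  then have "norm (a /\<^sub>R norm a) = 1 \<and> (\<exists>c. (\<forall>x\<in>e. (a /\<^sub>R norm a) \<bullet> x = c) \<and>
      (\<forall>x\<in>K. (a /\<^sub>R norm a) \<bullet> x \<le> c))"
    using ab by (auto intro!: exI[of _ "b / norm a"] simp: divide_inverse mult.commute intro!: mult_right_mono)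
  then show ?thesis unfolding outer_normal_def by (rule someI)
qed

lemma outer_normal_pm:
  fixes K e :: "'a::euclidean_space set"
  assumes "int DIM('a) simplex K" "e facet_of K"
  shows "outer_normal K e = face_normal e \<or> outer_normal K e = - face_normal e"
  using face_normal_props[OF assms] outer_normal_props[OF assms] unit_normals_pm[OF assms]
  by metis



lemma hull_eq_normal:
  fixes K e :: "'a::euclidean_space set"
  assumes "int DIM('a) simplex K" "e facet_of K" "n \<noteq> 0" "\<forall>x\<in>e. n \<bullet> x = c"
  shows "affine hull e = {x. n \<bullet> x = c}"
proof -
  obtain a b where ab: "a \<noteq> 0" "affine hull e = {x. a \<bullet> x = b}"
    using facet_hyperplane[OF assms(1,2)] by blast
  obtain x0 where x0: "x0 \<in> e" using assms(2) by (auto simp: facet_of_def)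
  define k where "k = (n \<bullet> a) / (a \<bullet> a)"
  have n: "n = k *\<^sub>R a" unfolding k_def by (rule normal_parallel[OF ab x0 assms(4)])
  have k0: "k \<noteq> 0" using n assms(3) by auto
  have "a \<bullet> x0 = b" using x0 ab hull_subset[of e affine] by auto
  moreover have "n \<bullet> x0 = c" using x0 assms(4) by auto
  ultimately have c: "c = k * b" using n by simp
  show ?thesis unfolding ab(2) using k0 by (auto simp: n c)
qed

lemma proj_norm_le:
  fixes n v :: "'a::euclidean_space"
  assumes "norm n = 1"
  shows "norm (v - (n \<bullet> v) *\<^sub>R n) \<le> norm v"
proof -
  define w where "w = v - (n \<bullet> v) *\<^sub>R n"
  have nn: "n \<bullet> n = 1" using assms by (simp add: dot_square_norm)
  have "w \<bullet> w = v \<bullet> v - (n \<bullet> v) * (n \<bullet> v)"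
    unfolding w_def by (simp add: inner_diff_left inner_diff_right nn inner_commute)
  then have "w \<bullet> w \<le> v \<bullet> v" by simp
  then have "(norm w)\<^sup>2 \<le> (norm v)\<^sup>2" by (simp only: power2_norm_eq_inner)
  then show ?thesis unfolding w_def[symmetric] using norm_ge_zero power2_le_imp_le by blast
qed

lemma prism_ball:
  fixes K e :: "'a::euclidean_space set"
  assumes "int DIM('a) simplex K" "e facet_of K"
  shows "\<exists>z r. r > 0 \<and> ball z r \<subseteq> face_prism e"
proof -
  define \<nu> where "\<nu> = face_normal e"
  obtain c where c: "\<forall>x\<in>e. \<nu> \<bullet> x = c" and nu1: "norm \<nu> = 1"
    using face_normal_props[OF assms] unfolding \<nu>_def by blast
  have nz: "\<nu> \<noteq> 0" using nu1 by auto
  have H: "affine hull e = {x. \<nu> \<bullet> x = c}"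
    using hull_eq_normal[OF assms nz c] .
  have "convex e" "e \<noteq> {}" using assms(2) by (auto simp: facet_of_def face_of_imp_convex)
  then obtain x where "x \<in> rel_interior e" using rel_interior_eq_empty by blast
  then obtain \<delta> where x: "x \<in> e" "\<delta> > 0" "ball x \<delta> \<inter> affine hull e \<subseteq> e"
    using mem_rel_interior_ball by blast
  have nn: "\<nu> \<bullet> \<nu> = 1" using nu1 by (simp add: dot_square_norm)
  have "ball (x + (1/2) *\<^sub>R \<nu>) (min \<delta> (1/2)) \<subseteq> face_prism e"
  proof
    fix y assume y: "y \<in> ball (x + (1/2) *\<^sub>R \<nu>) (min \<delta> (1/2))"
    define v where "v = y - (x + (1/2) *\<^sub>R \<nu>)"
    have nv: "norm v < min \<delta> (1/2)" using y unfolding v_def by (simp add: dist_norm norm_minus_commute)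
    define t where "t = 1/2 + \<nu> \<bullet> v"
    define p where "p = y - t *\<^sub>R \<nu>"
    have "\<bar>\<nu> \<bullet> v\<bar> \<le> norm v" using Cauchy_Schwarz_ineq2[of \<nu> v] nu1 by simp
    then have t: "t \<in> {0..1}" using nv unfolding t_def by auto
    have "p - x = v - (\<nu> \<bullet> v) *\<^sub>R \<nu>" unfolding p_def t_def v_def by (simp add: algebra_simps)
    then have "norm (p - x) < \<delta>" using proj_norm_le[OF nu1, of v] nv by simp
    then have "p \<in> ball x \<delta>" by (simp add: dist_norm norm_minus_commute)
    moreover have "\<nu> \<bullet> p = c" unfolding p_def t_def v_def
      using c x(1) nn by (simp add: inner_diff_right inner_add_right)
    ultimately have "p \<in> e" using x(3) H by auto
    moreover have "y = p + t *\<^sub>R \<nu>" unfolding p_def by simp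
    ultimately show "y \<in> face_prism e" unfolding face_prism_def \<nu>_def using t by blast
  qed
  then show ?thesis using x(2) by (intro exI[of _ "x + (1/2) *\<^sub>R \<nu>"] exI[of _ "min \<delta> (1/2)"]) auto
qed

lemma prism_compact:
  fixes K e :: "'a::euclidean_space set"
  assumes "int DIM('a) simplex K" "e facet_of K"
  shows "compact (face_prism e)"
proof -
  have K: "polytope K" using simplex_imp_polytope[OF assms(1)] .
  have "compact e" using face_of_imp_compact[of K e] K assms(2)
    by (simp add: facet_of_def polytope_imp_convex polytope_imp_compact)
  moreover have eq: "face_prism e = (\<lambda>p. fst p + snd p *\<^sub>R face_normal e) ` (e \<times> {0..1})"
    unfolding face_prism_def by (auto simp: image_def) (metis atLeastAtMost_iff)+
  ultimately show ?thesis unfolding eq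
    by (intro compact_continuous_image compact_Times compact_Icc continuous_intros)
qed

lemma surf_space [simp]: "space (surf e) = UNIV"
  by (simp add: surf_def)

lemma surf_emeasure:
  fixes K e :: "'a::euclidean_space set"
  assumes "int DIM('a) simplex K" "e facet_of K"
  shows "emeasure (surf e) UNIV = emeasure lebesgue (face_prism e)"
proof -
  have P: "face_prism e \<in> sets lebesgue"
    using prism_compact[OF assms] by (simp add: lmeasurable_compact fmeasurableD)
  have "continuous_on (face_prism e) (face_proj e)"
    unfolding face_proj_def[abs_def] by (intro continuous_intros)
  then have m: "face_proj e \<in> borel_measurable (lebesgue_on (face_prism e))"
    using continuous_imp_measurable_on_sets_lebesgue P by blast
  have "emeasure (surf e) UNIV = emeasure (lebesgue_on (face_prism e)) (face_proj e -` UNIV \<inter> space (lebesgue_on (face_prism e)))"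
    unfolding surf_def by (rule emeasure_distr[OF m]) simp
  also have "\<dots> = emeasure (lebesgue_on (face_prism e)) (face_prism e)" by simp
  also have "\<dots> = emeasure lebesgue (face_prism e)" using P by (simp add: emeasure_restrict_space)
  finally show ?thesis .
qed

lemma surf_finite:
  fixes K e :: "'a::euclidean_space set"
  assumes "int DIM('a) simplex K" "e facet_of K"
  shows "finite_measure (surf e)"
proof -
  have PL: "face_prism e \<in> lmeasurable" using prism_compact[OF assms] by (simp add: lmeasurable_compact)
  have "emeasure lebesgue (face_prism e) < \<infinity>" using fmeasurableD2[OF PL] by (simp add: less_top)
  then show ?thesis using surf_emeasure[OF assms] by (intro finite_measureI) auto
qed

lemma surf_measure_pos:
  fixes K e :: "'a::euclidean_space set"
  assumes "int DIM('a) simplex K" "e facet_of K"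
  shows "0 < measure (surf e) UNIV"
proof -
  have P: "face_prism e \<in> lmeasurable" using prism_compact[OF assms] by (simp add: lmeasurable_compact)
  obtain z r where zr: "r > 0" "ball z r \<subseteq> face_prism e" using prism_ball[OF assms] by blast
  have "0 < measure lborel (ball z r)" using zr by (simp add: content_ball_pos)
  also have "measure lborel (ball z r) = measure lebesgue (ball z r)"
    by (simp add: measure_completion)
  also have "\<dots> \<le> measure lebesgue (face_prism e)"
    using zr P by (intro measure_mono_fmeasurable) auto
  also have "\<dots> = measure (surf e) UNIV"
    using surf_emeasure[OF assms] by (simp add: measure_def)
  finally show ?thesis .
qed



lemma cone_in_K:
  fixes K :: "'a::euclidean_space set"
  assumes "convex K" "norm n = 1" "n \<bullet> x = c" "\<delta> > 0"
    and "ball x \<delta> \<inter> {z. n \<bullet> z = c} \<subseteq> K" "y \<in> K" "n \<bullet> y < c"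
  shows "\<exists>\<eta>>0. \<forall>z\<in>ball x \<eta>. n \<bullet> z < c \<longrightarrow> z \<in> K"
proof -
  define D where "D = c - n \<bullet> y"
  define R where "R = norm (y - x)"
  have D: "D > 0" using assms(7) unfolding D_def by simp
  have R: "R \<ge> 0" unfolding R_def by simp
  define \<eta> where "\<eta> = min (D/2) (\<delta> * D / (2 * (D + R)))"
  have \<eta>: "\<eta> > 0" unfolding \<eta>_def using D R assms(4) by (simp add: field_simps)
  have \<eta>1: "\<eta> \<le> D/2" unfolding \<eta>_def by (rule min.cobounded1)
  have \<eta>2: "\<eta> * (2 * (D + R)) \<le> \<delta> * D" unfolding \<eta>_def using D R
    by (metis min.cobounded2 pos_le_divide_eq add_pos_nonneg mult_pos_pos zero_less_numeral)
  have "\<forall>z\<in>ball x \<eta>. n \<bullet> z < c \<longrightarrow> z \<in> K"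
  proof (intro ballI impI)
    fix z assume z: "z \<in> ball x \<eta>" "n \<bullet> z < c"
    define r where "r = norm (z - x)"
    have r: "r < \<eta>" "r \<ge> 0" using z(1) unfolding r_def by (auto simp: dist_norm norm_minus_commute)
    define s where "s = (c - n \<bullet> z) / D"
    have "c - n \<bullet> z = n \<bullet> (x - z)" using assms(3) by (simp add: inner_diff_right)
    also have "\<dots> \<le> norm n * norm (x - z)" by (rule Cauchy_Schwarz_ineq2[THEN abs_le_D1])
    also have "\<dots> = r" using assms(2) unfolding r_def by (simp add: norm_minus_commute)
    finally have cz: "c - n \<bullet> z \<le> r" .
    have s0: "s > 0" unfolding s_def using z(2) D by simp
    have sr: "s * D \<le> r" unfolding s_def using cz D by simp
    have s1: "s \<le> 1/2"
    proof -
      have "s * D \<le> D / 2" using sr r \<eta>1 by linarith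
      then show ?thesis using D by (simp add: field_simps)
    qed
    define p where "p = (1 / (1 - s)) *\<^sub>R (z - s *\<^sub>R y)"
    have zp: "z = (1 - s) *\<^sub>R p + s *\<^sub>R y" unfolding p_def using s1 by simp
    have "n \<bullet> p = (n \<bullet> z - s * (n \<bullet> y)) / (1 - s)" unfolding p_def
      by (simp add: inner_diff_right)
    also have "n \<bullet> z - s * (n \<bullet> y) = c * (1 - s)"
      unfolding s_def D_def using D unfolding D_def by (simp add: field_simps)
    finally have np: "n \<bullet> p = c" using s1 by simp
    have e1: "(1 / (1 - s)) *\<^sub>R ((z - x) - s *\<^sub>R (y - x)) = (1 / (1 - s)) *\<^sub>R (z - s *\<^sub>R y) - (1 / (1 - s)) *\<^sub>R ((1 - s) *\<^sub>R x)"
      by (simp add: algebra_simps)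
    have e2: "(1 / (1 - s)) *\<^sub>R ((1 - s) *\<^sub>R x) = x" using s1 by simp
    have "p - x = (1 / (1 - s)) *\<^sub>R ((z - x) - s *\<^sub>R (y - x))"
      unfolding p_def e1 e2 ..
    then have "norm (p - x) = norm ((z - x) - s *\<^sub>R (y - x)) / (1 - s)"
      using s1 by simp
    also have "\<dots> \<le> 2 * norm ((z - x) - s *\<^sub>R (y - x))"
    proof -
      have i: "1 / (1 - s) \<le> 2" using s1 by (simp add: field_simps)
      have "norm ((z - x) - s *\<^sub>R (y - x)) / (1 - s) = norm ((z - x) - s *\<^sub>R (y - x)) * (1 / (1 - s))" by simp
      also have "\<dots> \<le> norm ((z - x) - s *\<^sub>R (y - x)) * 2" by (rule mult_left_mono[OF i]) simp
      finally show ?thesis by simp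
    qed
    also have "\<dots> \<le> 2 * (r + s * R)"
      unfolding r_def R_def using s0 norm_triangle_ineq4[of "z - x" "s *\<^sub>R (y - x)"] by simp
    also have "s * R \<le> r * R / D"
    proof -
      have "(s * D) * R \<le> r * R" using sr R by (rule mult_right_mono)
      then show ?thesis using D by (simp add: field_simps)
    qed
    then have "2 * (r + s * R) \<le> 2 * (r + r * R / D)" by simp
    also have "\<dots> = 2 * r * (D + R) / D" using D by (simp add: field_simps)
    also have "\<dots> < 2 * \<eta> * (D + R) / D"
    proof -
      have "2 * r * (D + R) < 2 * \<eta> * (D + R)" using r D R by (intro mult_strict_right_mono) auto
      then show ?thesis using D by (simp add: divide_strict_right_mono)
    qed
    also have "\<dots> \<le> \<delta>" using \<eta>2 D by (simp add: field_simps)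
    finally have "norm (p - x) < \<delta>" .
    then have "p \<in> ball x \<delta> \<inter> {z. n \<bullet> z = c}" using np by (simp add: dist_norm norm_minus_commute)
    then have "p \<in> K" using assms(5) by blast
    then show "z \<in> K" unfolding zp using convexD[OF assms(1) _ assms(6)] s0 s1 by simp
  qed
  then show ?thesis using \<eta> by blast
qed



lemma exists_below:
  fixes K :: "'a::euclidean_space set"
  assumes "int DIM('a) simplex K" "n \<noteq> 0" "\<forall>y\<in>K. n \<bullet> y \<le> c"
  shows "\<exists>y\<in>K. n \<bullet> y < c"
proof (rule ccontr)
  assume "\<not> ?thesis"
  then have "K \<subseteq> {x. n \<bullet> x = c}" using assms(3) by force
  then have "aff_dim K \<le> aff_dim {x. n \<bullet> x = c}" by (rule aff_dim_subset)
  also have "\<dots> = int DIM('a) - 1" using assms(2) by (simp add: aff_dim_hyperplane)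
  finally show False using aff_dim_simplex[OF assms(1)] by simp
qed

lemma interiors_meet:
  fixes K K' e :: "'a::euclidean_space set"
  assumes K: "int DIM('a) simplex K" "e facet_of K"
    and K': "int DIM('a) simplex K'" "e facet_of K'"
    and eq: "outer_normal K' e = outer_normal K e"
  shows "interior K \<inter> interior K' \<noteq> {}"
proof -
  define n where "n = outer_normal K e"
  obtain c where n1: "norm n = 1" and c: "\<forall>x\<in>e. n \<bullet> x = c" "\<forall>x\<in>K. n \<bullet> x \<le> c"
    using outer_normal_props[OF K] unfolding n_def by blast
  obtain c' where c': "\<forall>x\<in>e. n \<bullet> x = c'" "\<forall>x\<in>K'. n \<bullet> x \<le> c'"
    using outer_normal_props[OF K'] unfolding n_def eq by blast
  obtain x0 where x0: "x0 \<in> e" using K(2) by (auto simp: facet_of_def)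
  have cc: "c' = c" using c(1) c'(1) x0 by force
  have nz: "n \<noteq> 0" using n1 by auto
  have H: "affine hull e = {x. n \<bullet> x = c}" using hull_eq_normal[OF K nz c(1)] .
  have "convex e" "e \<noteq> {}" using K(2) by (auto simp: facet_of_def face_of_imp_convex)
  then obtain x where "x \<in> rel_interior e" using rel_interior_eq_empty by blast
  then obtain \<delta> where x: "x \<in> e" "\<delta> > 0" "ball x \<delta> \<inter> affine hull e \<subseteq> e"
    using mem_rel_interior_ball by blast
  have eK: "e \<subseteq> K" "e \<subseteq> K'" using K(2) K'(2) by (auto simp: facet_of_def face_of_imp_subset)
  have cvx: "convex K" "convex K'"
    using K(1) K'(1) by (auto intro: polytope_imp_convex simplex_imp_polytope)
  obtain y where y: "y \<in> K" "n \<bullet> y < c" using exists_below[OF K(1) nz c(2)] by blast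
  obtain y' where y': "y' \<in> K'" "n \<bullet> y' < c" using exists_below[OF K'(1) nz c'(2)] cc by blast
  have xc: "n \<bullet> x = c" using c(1) x(1) by blast
  obtain \<eta> where \<eta>: "\<eta> > 0" "\<forall>z\<in>ball x \<eta>. n \<bullet> z < c \<longrightarrow> z \<in> K"
    using cone_in_K[OF cvx(1) n1 xc x(2) _ y] x(3) eK H by blast
  obtain \<eta>' where \<eta>': "\<eta>' > 0" "\<forall>z\<in>ball x \<eta>'. n \<bullet> z < c \<longrightarrow> z \<in> K'"
    using cone_in_K[OF cvx(2) n1 xc x(2) _ y'] x(3) eK H by blast
  define U where "U = ball x (min \<eta> \<eta>') \<inter> {z. n \<bullet> z < c}"
  have oU: "open U" unfolding U_def by (intro open_Int open_ball open_halfspace_lt)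
  have UK: "U \<subseteq> K" "U \<subseteq> K'" using \<eta> \<eta>' unfolding U_def by auto
  have "U \<subseteq> interior K" by (rule interior_maximal[OF UK(1) oU])
  moreover have "U \<subseteq> interior K'" by (rule interior_maximal[OF UK(2) oU])
  moreover have "x - (min \<eta> \<eta>' / 2) *\<^sub>R n \<in> U"
  proof -
    have "n \<bullet> n = 1" using n1 by (simp add: dot_square_norm)
    then have "n \<bullet> (x - (min \<eta> \<eta>' / 2) *\<^sub>R n) < c" using xc \<eta> \<eta>' by (simp add: inner_diff_right)
    moreover have "dist x (x - (min \<eta> \<eta>' / 2) *\<^sub>R n) < min \<eta> \<eta>'" using n1 \<eta>(1) \<eta>'(1) by (simp add: dist_norm min_def)
    ultimately show ?thesis unfolding U_def by simp
  qed
  ultimately show ?thesis by blast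
qed

lemma mesh_mult_le2:
  fixes \<Omega> :: "'a::euclidean_space set"
  assumes "is_mesh \<Omega> T"
  shows "card {K\<in>T. e facet_of K} \<le> 2"
proof (cases "{K\<in>T. e facet_of K} = {}")
  case True then show ?thesis by (simp only: True card.empty)
next
  case False
  then obtain K0 where K0: "K0 \<in> T" "e facet_of K0" by blast
  have fin: "finite T" and simpK: "\<forall>K\<in>T. int DIM('a) simplex K"
    and disj: "\<forall>K\<in>T. \<forall>K'\<in>T. K \<noteq> K' \<longrightarrow> interior K \<inter> interior K' = {}"
    using assms unfolding is_mesh_def by auto
  let ?S = "{K\<in>T. e facet_of K}"
  have inj: "inj_on (\<lambda>K. outer_normal K e) ?S"
  proof (rule inj_onI)
    fix K K' assume a: "K \<in> ?S" "K' \<in> ?S" "outer_normal K e = outer_normal K' e"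
    show "K = K'"
    proof (rule ccontr)
      assume "K \<noteq> K'"
      then have "interior K \<inter> interior K' = {}" using disj a(1,2) by blast
      moreover have "interior K \<inter> interior K' \<noteq> {}"
        using interiors_meet[of K e K'] simpK a by auto
      ultimately show False by blast
    qed
  qed
  have sub: "(\<lambda>K. outer_normal K e) ` ?S \<subseteq> {face_normal e, - face_normal e}"
  proof
    fix v assume "v \<in> (\<lambda>K. outer_normal K e) ` ?S"
    then obtain K where "K \<in> T" "e facet_of K" "v = outer_normal K e" by blast
    then show "v \<in> {face_normal e, - face_normal e}" using outer_normal_pm[of K e] simpK by auto
  qed
  have "card ?S = card ((\<lambda>K. outer_normal K e) ` ?S)" using card_image[OF inj] by simp
  also have "\<dots> \<le> card {face_normal e, - face_normal e}" by (rule card_mono[OF _ sub]) simp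
  also have "\<dots> \<le> 2" by (simp add: card_insert_if)
  finally show ?thesis .
qed



definition sgn_on :: "'a::euclidean_space set \<Rightarrow> 'a set \<Rightarrow> real" where
  "sgn_on K e = outer_normal K e \<bullet> face_normal e"

definition mes :: "'a::euclidean_space set \<Rightarrow> real" where
  "mes e = measure (surf e) UNIV"

lemma mesh_simplex: "is_mesh \<Omega> T \<Longrightarrow> K \<in> T \<Longrightarrow> int DIM('a::euclidean_space) simplex (K::'a set)"
  by (simp add: is_mesh_def)

lemma mesh_finite: "is_mesh \<Omega> T \<Longrightarrow> finite T"
  by (simp add: is_mesh_def)

lemma facets_finite:
  fixes K :: "'a::euclidean_space set"
  assumes "int DIM('a) simplex K"
  shows "finite {e. e facet_of K}"
proof -
  have "finite {F. F face_of K}" using finite_polytope_faces simplex_imp_polytope assms by blast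
  then show ?thesis by (rule rev_finite_subset) (auto simp: facet_of_def)
qed

lemma mesh_faces_finite:
  fixes T :: "'a::euclidean_space set set"
  assumes "is_mesh \<Omega> T" shows "finite (mesh_faces T)"
proof -
  have "mesh_faces T = (\<Union>K\<in>T. {e. e facet_of K})" unfolding mesh_faces_def by auto
  then show ?thesis using mesh_finite[OF assms] facets_finite mesh_simplex[OF assms] by auto
qed

lemma mesh_face_props:
  fixes T :: "'a::euclidean_space set set"
  assumes "is_mesh \<Omega> T" "e \<in> mesh_faces T"
  shows "finite_measure (surf e)" "mes e > 0" "norm (face_normal e) = 1"
    "face_normal e \<bullet> face_normal e = 1"
    "{K\<in>T. e facet_of K} \<noteq> {}"
proof -
  obtain K where K: "K \<in> T" "e facet_of K" using assms(2) unfolding mesh_faces_def by blast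
  have S: "int DIM('a) simplex K" using mesh_simplex[OF assms(1) K(1)] .
  show "finite_measure (surf e)" using surf_finite[OF S K(2)] .
  show "mes e > 0" unfolding mes_def using surf_measure_pos[OF S K(2)] .
  show n: "norm (face_normal e) = 1" using face_normal_props[OF S K(2)] by blast
  then show "face_normal e \<bullet> face_normal e = 1" by (simp add: dot_square_norm)
  show "{K\<in>T. e facet_of K} \<noteq> {}" using K by blast
qed

lemma outer_sgn:
  fixes K e :: "'a::euclidean_space set"
  assumes "int DIM('a) simplex K" "e facet_of K"
  shows "outer_normal K e = sgn_on K e *\<^sub>R face_normal e" "(sgn_on K e)\<^sup>2 = 1"
proof -
  have n: "norm (face_normal e) = 1" using face_normal_props[OF assms] by blast
  then have nn: "face_normal e \<bullet> face_normal e = 1" by (simp add: dot_square_norm)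
  from outer_normal_pm[OF assms] show "outer_normal K e = sgn_on K e *\<^sub>R face_normal e"
    unfolding sgn_on_def using nn by auto
  from outer_normal_pm[OF assms] show "(sgn_on K e)\<^sup>2 = 1"
    unfolding sgn_on_def using nn by auto
qed

lemma sum_swap:
  fixes T :: "'a::euclidean_space set set"
  assumes "is_mesh \<Omega> T"
  shows "(\<Sum>K\<in>T. \<Sum>e\<in>{e. e facet_of K}. g K e) =
         (\<Sum>e\<in>mesh_faces T. \<Sum>K\<in>{K\<in>T. e facet_of K}. g K e)"
proof -
  have "(\<Sum>K\<in>T. \<Sum>e\<in>{e. e facet_of K}. g K e) = (\<Sum>K\<in>T. \<Sum>e\<in>{e\<in>mesh_faces T. e facet_of K}. g K e)"
    by (intro sum.cong refl) (auto simp: mesh_faces_def)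
  also have "\<dots> = (\<Sum>e\<in>mesh_faces T. \<Sum>K\<in>{K\<in>T. e facet_of K}. g K e)"
    by (rule sum.swap_restrict[OF mesh_finite[OF assms] mesh_faces_finite[OF assms]])
  finally show ?thesis .
qed

lemma jump_eq:
  fixes T :: "'a::euclidean_space set set"
  assumes "is_mesh \<Omega> T" "e \<in> mesh_faces T"
  shows "jump T w e = (\<Sum>K\<in>{K\<in>T. e facet_of K}. w K * sgn_on K e) *\<^sub>R face_normal e"
proof -
  have "jump T w e = (\<Sum>K\<in>{K\<in>T. e facet_of K}. (w K * sgn_on K e) *\<^sub>R face_normal e)"
    unfolding jump_def
    by (intro sum.cong refl) (simp add: outer_sgn(1)[OF mesh_simplex[OF assms(1)]])
  then show ?thesis by (simp add: scaleR_sum_left)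
qed

lemma mu_eq:
  fixes T :: "'a::euclidean_space set set"
  assumes "is_mesh \<Omega> T" "e \<in> mesh_faces T"
  shows "jump T w e \<bullet> face_normal e = (\<Sum>K\<in>{K\<in>T. e facet_of K}. w K * sgn_on K e)"
  using jump_eq[OF assms] mesh_face_props(4)[OF assms] by simp

lemma pair_witness:
  fixes T :: "'a::euclidean_space set set"
  assumes "is_mesh \<Omega> T"
  shows "bdry_pair T (\<lambda>e x. \<alpha> e *\<^sub>R face_normal e) w =
         (\<Sum>e\<in>mesh_faces T. \<alpha> e * mes e * (jump T w e \<bullet> face_normal e))"
proof -
  have "bdry_pair T (\<lambda>e x. \<alpha> e *\<^sub>R face_normal e) w =
        (\<Sum>K\<in>T. \<Sum>e\<in>{e. e facet_of K}. \<alpha> e * mes e * (w K * sgn_on K e))"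
    unfolding bdry_pair_def mes_def sgn_on_def
    by (intro sum.cong refl) (simp add: inner_commute)
  also have "\<dots> = (\<Sum>e\<in>mesh_faces T. \<Sum>K\<in>{K\<in>T. e facet_of K}. \<alpha> e * mes e * (w K * sgn_on K e))"
    by (rule sum_swap[OF assms])
  also have "\<dots> = (\<Sum>e\<in>mesh_faces T. \<alpha> e * mes e * (jump T w e \<bullet> face_normal e))"
    by (intro sum.cong refl) (simp add: mu_eq[OF assms] sum_distrib_left)
  finally show ?thesis .
qed

lemma norm_witness:
  fixes T :: "'a::euclidean_space set set"
  assumes "is_mesh \<Omega> T"
  shows "bdry_norm T (\<lambda>e x. \<alpha> e *\<^sub>R face_normal e) =
         sqrt (\<Sum>e\<in>mesh_faces T. (\<alpha> e)\<^sup>2 * mes e * real (card {K\<in>T. e facet_of K}))"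
proof -
  have "(\<Sum>K\<in>T. \<Sum>e\<in>{e. e facet_of K}. \<integral>x. ((\<alpha> e *\<^sub>R face_normal e) \<bullet> outer_normal K e)\<^sup>2 \<partial>surf e) =
        (\<Sum>K\<in>T. \<Sum>e\<in>{e. e facet_of K}. (\<alpha> e)\<^sup>2 * mes e)"
  proof (intro sum.cong refl)
    fix K e assume "K \<in> T" "e \<in> {e. e facet_of K}"
    then have "(sgn_on K e)\<^sup>2 = 1" using outer_sgn(2) mesh_simplex[OF assms] by blast
    then show "(\<integral>x. ((\<alpha> e *\<^sub>R face_normal e) \<bullet> outer_normal K e)\<^sup>2 \<partial>surf e) = (\<alpha> e)\<^sup>2 * mes e"
      unfolding mes_def sgn_on_def by (simp add: inner_commute power_mult_distrib)
  qed
  also have "\<dots> = (\<Sum>e\<in>mesh_faces T. \<Sum>K\<in>{K\<in>T. e facet_of K}. (\<alpha> e)\<^sup>2 * mes e)"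
    by (rule sum_swap[OF assms])
  also have "\<dots> = (\<Sum>e\<in>mesh_faces T. (\<alpha> e)\<^sup>2 * mes e * real (card {K\<in>T. e facet_of K}))"
    by (intro sum.cong refl) simp
  finally show ?thesis unfolding bdry_norm_def by simp
qed

lemma jump_norm_eq:
  fixes T :: "'a::euclidean_space set set"
  assumes "is_mesh \<Omega> T"
  shows "jump_norm T w = sqrt (\<Sum>e\<in>mesh_faces T. mes e * (jump T w e \<bullet> face_normal e)\<^sup>2)"
proof -
  have "(\<Sum>e\<in>mesh_faces T. \<integral>x. (norm (jump T w e))\<^sup>2 \<partial>surf e) =
        (\<Sum>e\<in>mesh_faces T. mes e * (jump T w e \<bullet> face_normal e)\<^sup>2)"
  proof (intro sum.cong refl)
    fix e assume e: "e \<in> mesh_faces T"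
    have "norm (jump T w e) = \<bar>jump T w e \<bullet> face_normal e\<bar>"
      unfolding jump_eq[OF assms e] mu_eq[OF assms e]
      using mesh_face_props(3,4)[OF assms e] by simp
    then show "(\<integral>x. (norm (jump T w e))\<^sup>2 \<partial>surf e) = mes e * (jump T w e \<bullet> face_normal e)\<^sup>2"
      unfolding mes_def by simp
  qed
  then show ?thesis unfolding jump_norm_def by simp
qed



lemma simplex_has_facet:
  fixes K :: "'a::euclidean_space set"
  assumes "int DIM('a) simplex K"
  shows "\<exists>e. e facet_of K"
proof -
  obtain C where C: "finite C" "\<not> affine_dependent C" "int (card C) = int DIM('a) + 1" "K = convex hull C"
    using assms unfolding simplex by blast
  have c2: "card C \<ge> 2" using C(3) DIM_positive[where 'a='a] by linarith
  then have "C \<noteq> {}" by auto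
  then obtain u where u: "u \<in> C" by blast
  have "card (C - {u}) \<ge> 1" using c2 u C(1) by (simp add: card_Diff_singleton)
  then have "C - {u} \<noteq> {}" by (metis card.empty not_one_le_zero)
  then have "convex hull (C - {u}) \<noteq> {}" by auto
  then have "convex hull (C - {u}) facet_of K"
    unfolding C(4) using facet_of_convex_hull_affine_independent[OF C(2)] u by blast
  then show ?thesis by blast
qed

lemma cs_abstract:
  fixes P W S :: real
  assumes "\<forall>l>0. 2 * P \<le> l * W + S / l" "W \<ge> 0" "S > 0"
  shows "P \<le> sqrt W * sqrt S"
proof (cases "W > 0")
  case True
  define l where "l = sqrt S / sqrt W"
  have l: "l > 0" unfolding l_def using True assms(3) by simp
  have "l * W = sqrt W * sqrt S" unfolding l_def using True
    by (simp add: field_simps; metis less_eq_real_def real_sqrt_pow2 power2_eq_square)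
  moreover have "S / l = sqrt W * sqrt S" unfolding l_def using True assms(3)
    by (simp add: field_simps; metis less_eq_real_def real_sqrt_pow2 power2_eq_square)
  moreover have "2 * P \<le> l * W + S / l" using assms(1) l by blast
  ultimately show ?thesis by linarith
next
  case False
  then have W: "W = 0" using assms(2) by simp
  show ?thesis
  proof (rule ccontr)
    assume "\<not> ?thesis"
    then have P: "P > 0" using W by simp
    have "S / P > 0" using P assms(3) by simp
    then have "2 * P \<le> (S / P) * W + S / (S / P)" using assms(1) by blast
    then have "2 * P \<le> S / (S / P)" using W by simp
    then show False using P assms(3) by simp
  qed
qed

lemma local_bound:
  fixes e :: "'a::euclidean_space set" and f :: "'a \<Rightarrow> real"
  assumes fin: "finite_measure (surf e)"
    and fm: "f \<in> borel_measurable (surf e)"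
    and fi: "integrable (surf e) (\<lambda>x. (f x)\<^sup>2)"
    and l: "l > 0"
  shows "2 * (\<integral>x. f x * a \<partial>surf e) \<le> l * (a\<^sup>2 * mes e) + (\<integral>x. (f x)\<^sup>2 \<partial>surf e) / l"
proof -
  interpret finite_measure "surf e" by (rule fin)
  have i1: "integrable (surf e) (\<lambda>x. 1 + (f x)\<^sup>2)" using fi by simp
  have ae: "AE x in surf e. norm (f x) \<le> norm (1 + (f x)\<^sup>2)"
  proof (rule AE_I2)
    fix x
    have "\<bar>f x\<bar> \<le> 1 + (f x)\<^sup>2"
    proof (cases "\<bar>f x\<bar> \<le> 1")
      case True then show ?thesis by (simp add: add_increasing2)
    next
      case False
      then have "\<bar>f x\<bar> * 1 \<le> \<bar>f x\<bar> * \<bar>f x\<bar>" by (intro mult_left_mono) auto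
      then show ?thesis by (simp add: power2_eq_square)
    qed
    then show "norm (f x) \<le> norm (1 + (f x)\<^sup>2)" by simp
  qed
  have f1: "integrable (surf e) f" by (rule Bochner_Integration.integrable_bound[OF i1 fm ae])
  have ptw: "2 * (f x * a) \<le> l * a\<^sup>2 + (f x)\<^sup>2 / l" for x
  proof -
    have "0 \<le> (l * a - f x)\<^sup>2 / l" using l by simp
    also have "(l * a - f x)\<^sup>2 / l = l * a\<^sup>2 + (f x)\<^sup>2 / l - 2 * (f x * a)"
      using l by (simp add: field_simps power2_eq_square)
    finally show ?thesis by simp
  qed
  have "2 * (\<integral>x. f x * a \<partial>surf e) = (\<integral>x. 2 * (f x * a) \<partial>surf e)" by simp
  also have "\<dots> \<le> (\<integral>x. l * a\<^sup>2 + (f x)\<^sup>2 / l \<partial>surf e)"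
    by (rule integral_mono) (use f1 fi ptw in auto)
  also have "\<dots> = l * (a\<^sup>2 * mes e) + (\<integral>x. (f x)\<^sup>2 \<partial>surf e) / l"
    using fi by (simp add: mes_def)
  finally show ?thesis .
qed



lemma face_fun_props:
  fixes T :: "'a::euclidean_space set set"
  assumes mesh: "is_mesh \<Omega> T" and ns: "normal_spaces T N" and r: "r \<in> Nh T N"
    and K: "K \<in> T" "e facet_of K"
  shows "(\<lambda>x. r e x \<bullet> outer_normal K e) \<in> borel_measurable (surf e)"
    "integrable (surf e) (\<lambda>x. (r e x \<bullet> outer_normal K e)\<^sup>2)"
proof -
  have e: "e \<in> mesh_faces T" using K unfolding mesh_faces_def by blast
  have re: "r e \<in> N e" using r e unfolding Nh_def by blast
  have m: "r e \<in> borel_measurable (surf e)" and i: "integrable (surf e) (\<lambda>x. (norm (r e x))\<^sup>2)"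
    using ns e re unfolding normal_spaces_def by blast+
  have n1: "norm (outer_normal K e) = 1"
    using outer_normal_props[OF mesh_simplex[OF mesh K(1)] K(2)] by blast
  show fm: "(\<lambda>x. r e x \<bullet> outer_normal K e) \<in> borel_measurable (surf e)"
    by (rule borel_measurable_inner[OF m borel_measurable_const])
  have "AE x in surf e. norm ((r e x \<bullet> outer_normal K e)\<^sup>2) \<le> norm ((norm (r e x))\<^sup>2)"
  proof (rule AE_I2)
    fix x
    have "\<bar>r e x \<bullet> outer_normal K e\<bar> \<le> norm (r e x)"
      using Cauchy_Schwarz_ineq2[of "r e x" "outer_normal K e"] n1 by simp
    then have "(r e x \<bullet> outer_normal K e)\<^sup>2 \<le> (norm (r e x))\<^sup>2"
      by (metis abs_ge_zero power2_abs power_mono)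
    then show "norm ((r e x \<bullet> outer_normal K e)\<^sup>2) \<le> norm ((norm (r e x))\<^sup>2)" by simp
  qed
  then show "integrable (surf e) (\<lambda>x. (r e x \<bullet> outer_normal K e)\<^sup>2)"
    by (rule Bochner_Integration.integrable_bound[OF i borel_measurable_power[OF fm]])
qed

lemma pair_bound:
  fixes T :: "'a::euclidean_space set set"
  assumes mesh: "is_mesh \<Omega> T" and ns: "normal_spaces T N" and r: "r \<in> Nh T N"
    and nz: "bdry_norm T r \<noteq> 0"
  shows "bdry_pair T r w / bdry_norm T r \<le> sqrt (\<Sum>K\<in>T. \<Sum>e\<in>{e. e facet_of K}. (w K)\<^sup>2 * mes e)"
proof -
  define W where "W = (\<Sum>K\<in>T. \<Sum>e\<in>{e. e facet_of K}. (w K)\<^sup>2 * mes e)"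
  define S where "S = (\<Sum>K\<in>T. \<Sum>e\<in>{e. e facet_of K}. \<integral>x. (r e x \<bullet> outer_normal K e)\<^sup>2 \<partial>surf e)"
  define P where "P = bdry_pair T r w"
  have S0: "S \<ge> 0" unfolding S_def by (intro sum_nonneg) simp
  have W0: "W \<ge> 0" unfolding W_def mes_def by (intro sum_nonneg) simp
  have BS: "bdry_norm T r = sqrt S" unfolding bdry_norm_def S_def ..
  have Spos: "S > 0" using S0 nz BS by fastforce
  have "\<forall>l>0. 2 * P \<le> l * W + S / l"
  proof (intro allI impI)
    fix l :: real assume l: "l > 0"
    have "2 * P = (\<Sum>K\<in>T. \<Sum>e\<in>{e. e facet_of K}. 2 * (\<integral>x. (r e x \<bullet> outer_normal K e) * w K \<partial>surf e))"
      unfolding P_def bdry_pair_def by (simp add: sum_distrib_left)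
    also have "\<dots> \<le> (\<Sum>K\<in>T. \<Sum>e\<in>{e. e facet_of K}. l * ((w K)\<^sup>2 * mes e) + (\<integral>x. (r e x \<bullet> outer_normal K e)\<^sup>2 \<partial>surf e) / l)"
    proof (intro sum_mono)
      fix K e assume K: "K \<in> T" "e \<in> {e. e facet_of K}"
      then have e: "e \<in> mesh_faces T" unfolding mesh_faces_def by blast
      have fK: "e facet_of K" using K by simp
      show "2 * (\<integral>x. (r e x \<bullet> outer_normal K e) * w K \<partial>surf e) \<le> l * ((w K)\<^sup>2 * mes e) + (\<integral>x. (r e x \<bullet> outer_normal K e)\<^sup>2 \<partial>surf e) / l"
        using local_bound[OF mesh_face_props(1)[OF mesh e] face_fun_props[OF mesh ns r K(1) fK] l] .
    qed
    also have "\<dots> = l * W + S / l"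
      unfolding W_def S_def by (simp only: sum.distrib sum_distrib_left sum_divide_distrib)
    finally show "2 * P \<le> l * W + S / l" .
  qed
  then have "P \<le> sqrt W * sqrt S" using cs_abstract W0 Spos by blast
  then have "P / sqrt S \<le> sqrt W" using Spos by (simp add: divide_le_eq)
  then show ?thesis unfolding P_def BS W_def .
qed



lemma main_T:
  fixes T :: "'a::euclidean_space set set"
  assumes mesh: "is_mesh \<Omega> T" and ns: "normal_spaces T N"
    and wit: "\<forall>\<mu>::'a set \<Rightarrow> real. (\<lambda>e x. \<mu> e *\<^sub>R face_normal e) \<in> Nh T N"
  shows "(1/2) * jump_norm T w \<le>
           (SUP r\<in>{r\<in>Nh T N. bdry_norm T r \<noteq> 0}. bdry_pair T r w / bdry_norm T r)"
proof -
  let ?X = "{r\<in>Nh T N. bdry_norm T r \<noteq> 0}"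
  let ?g = "\<lambda>r. bdry_pair T r w / bdry_norm T r"
  let ?E = "mesh_faces T"
  have finE: "finite ?E" by (rule mesh_faces_finite[OF mesh])
  have bdd: "bdd_above (?g ` ?X)"
    by (rule bdd_aboveI2[where M="sqrt (\<Sum>K\<in>T. \<Sum>e\<in>{e. e facet_of K}. (w K)\<^sup>2 * mes e)"])
       (use pair_bound[OF mesh ns] in blast)
  define \<mu> where "\<mu> e = jump T w e \<bullet> face_normal e" for e
  define A where "A = (\<Sum>e\<in>?E. mes e * (\<mu> e)\<^sup>2)"
  have J: "jump_norm T w = sqrt A" unfolding A_def \<mu>_def by (rule jump_norm_eq[OF mesh])
  have mes0: "\<And>e. e \<in> ?E \<Longrightarrow> mes e > 0" using mesh_face_props(2)[OF mesh] by blast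
  have m1: "\<And>e. e \<in> ?E \<Longrightarrow> 1 \<le> real (card {K\<in>T. e facet_of K})"
  proof -
    fix e assume e: "e \<in> ?E"
    have "{K\<in>T. e facet_of K} \<noteq> {}" using mesh_face_props(5)[OF mesh e] .
    moreover have "finite {K\<in>T. e facet_of K}" using mesh_finite[OF mesh] by simp
    ultimately have "card {K\<in>T. e facet_of K} > 0" by (simp add: card_gt_0_iff)
    then show "1 \<le> real (card {K\<in>T. e facet_of K})" by simp
  qed
  have m2: "\<And>e. real (card {K\<in>T. e facet_of K}) \<le> 2"
    using mesh_mult_le2[OF mesh] by (metis numeral_le_real_of_nat_iff of_nat_le_iff of_nat_numeral)
  have A0: "A \<ge> 0" unfolding A_def using mes0 by (intro sum_nonneg) (simp add: less_imp_le)
  have "\<exists>r\<in>?X. (1/2) * sqrt A \<le> ?g r"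
  proof (cases "A > 0")
    case True
    define r0 where "r0 = (\<lambda>(e::'a set) (x::'a). \<mu> e *\<^sub>R face_normal e)"
    have r0N: "r0 \<in> Nh T N" unfolding r0_def using wit by blast
    define B where "B = (\<Sum>e\<in>?E. (\<mu> e)\<^sup>2 * mes e * real (card {K\<in>T. e facet_of K}))"
    have P: "bdry_pair T r0 w = A" unfolding r0_def pair_witness[OF mesh] A_def \<mu>_def[symmetric]
      by (intro sum.cong refl) (simp add: power2_eq_square)
    have Nr: "bdry_norm T r0 = sqrt B" unfolding r0_def norm_witness[OF mesh] B_def ..
    have AB: "A \<le> B" unfolding A_def B_def
    proof (intro sum_mono)
      fix e assume e: "e \<in> ?E"
      have "(\<mu> e)\<^sup>2 * mes e * 1 \<le> (\<mu> e)\<^sup>2 * mes e * real (card {K\<in>T. e facet_of K})"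
        using m1[OF e] mes0[OF e] by (intro mult_left_mono) auto
      then show "mes e * (\<mu> e)\<^sup>2 \<le> (\<mu> e)\<^sup>2 * mes e * real (card {K\<in>T. e facet_of K})"
        by (simp add: mult.commute)
    qed
    have BA: "B \<le> 4 * A" unfolding A_def B_def sum_distrib_left
    proof (intro sum_mono)
      fix e assume e: "e \<in> ?E"
      have "(\<mu> e)\<^sup>2 * mes e * real (card {K\<in>T. e facet_of K}) \<le> (\<mu> e)\<^sup>2 * mes e * 4"
        using m2[of e] mes0[OF e] by (intro mult_left_mono) auto
      then show "(\<mu> e)\<^sup>2 * mes e * real (card {K\<in>T. e facet_of K}) \<le> 4 * (mes e * (\<mu> e)\<^sup>2)"
        by (simp add: mult.commute mult.left_commute)
    qed
    have sA: "sqrt A > 0" using True by simp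
    have sB: "sqrt B \<ge> sqrt A" using AB by simp
    have sB2: "sqrt B \<le> 2 * sqrt A"
    proof -
      have "sqrt B \<le> sqrt (4 * A)" using BA by simp
      also have "sqrt (4 * A) = 2 * sqrt A" by (simp add: real_sqrt_mult)
      finally show ?thesis .
    qed
    have Bpos: "sqrt B > 0" using sA sB by linarith
    have "(1/2) * sqrt A * sqrt B \<le> (1/2) * sqrt A * (2 * sqrt A)"
      using sB2 sA by (intro mult_left_mono) auto
    also have "\<dots> = A" using A0 by simp
    finally have "(1/2) * sqrt A \<le> A / sqrt B" using Bpos by (simp add: pos_le_divide_eq)
    then have "(1/2) * sqrt A \<le> ?g r0" unfolding P Nr .
    moreover have "r0 \<in> ?X" using r0N Nr Bpos by simp
    ultimately show ?thesis by blast
  next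
    case False
    then have A00: "A = 0" using A0 by simp
    have mu0: "\<And>e. e \<in> ?E \<Longrightarrow> \<mu> e = 0"
    proof -
      fix e assume e: "e \<in> ?E"
      have "\<forall>e\<in>?E. mes e * (\<mu> e)\<^sup>2 = 0"
        using A00 finE mes0 unfolding A_def by (subst sum_nonneg_eq_0_iff[symmetric]) (auto simp: less_imp_le)
      then show "\<mu> e = 0" using e mes0[OF e] by force
    qed
    define r1 where "r1 = (\<lambda>(e::'a set) (x::'a). (\<lambda>e. 1::real) e *\<^sub>R face_normal e)"
    have r1N: "r1 \<in> Nh T N" unfolding r1_def using spec[OF wit, of "\<lambda>e. 1"] by simp
    have P: "bdry_pair T r1 w = 0" unfolding r1_def pair_witness[OF mesh] \<mu>_def[symmetric]
      using mu0 by simp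
    have Tne: "T \<noteq> {}" using mesh unfolding is_mesh_def by simp
    then obtain K where K: "K \<in> T" by blast
    obtain e where e: "e facet_of K" using simplex_has_facet[OF mesh_simplex[OF mesh K]] by blast
    have eE: "e \<in> ?E" using K e unfolding mesh_faces_def by blast
    have "0 < (\<Sum>e\<in>?E. ((\<lambda>e. 1::real) e)\<^sup>2 * mes e * real (card {K\<in>T. e facet_of K}))"
    proof (rule sum_pos2[OF finE eE])
      show "0 < ((\<lambda>e. 1::real) e)\<^sup>2 * mes e * real (card {K\<in>T. e facet_of K})"
        using mes0[OF eE] m1[OF eE] by simp
      show "\<And>i. i \<in> ?E \<Longrightarrow> 0 \<le> ((\<lambda>e. 1::real) i)\<^sup>2 * mes i * real (card {K\<in>T. i facet_of K})"
        using mes0 by (simp add: less_imp_le)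
    qed
    then have Npos: "bdry_norm T r1 > 0" unfolding r1_def norm_witness[OF mesh] by simp
    have "(1/2) * sqrt A \<le> ?g r1" using P A00 by simp
    moreover have "r1 \<in> ?X" using r1N Npos by simp
    ultimately show ?thesis by blast
  qed
  then obtain r where r: "r \<in> ?X" "(1/2) * sqrt A \<le> ?g r" by blast
  have "?g r \<le> (SUP r\<in>?X. ?g r)" by (rule cSUP_upper[OF r(1) bdd])
  then show ?thesis unfolding J using r(2) by linarith
qed

theorem theorem1:
  fixes \<Omega> :: "'a::euclidean_space set"
    and F :: "'a set set set"
    and N :: "'a set set \<Rightarrow> 'a set \<Rightarrow> ('a \<Rightarrow> 'a) set"
  assumes "DIM('a) = 2 \<or> DIM('a) = 3"
    and "polytope \<Omega>" and "convex \<Omega>" and "interior \<Omega> \<noteq> {}"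
    and "quasi_uniform_family \<Omega> F"
    and "\<forall>T\<in>F. normal_spaces T (N T)"
    and "\<forall>T\<in>F. \<forall>\<mu>::'a set \<Rightarrow> real. (\<lambda>e x. \<mu> e *\<^sub>R face_normal e) \<in> Nh T (N T)"
  shows "\<exists>C>0. \<forall>T\<in>F. \<forall>w::'a set \<Rightarrow> real.
           C * jump_norm T w \<le>
           (SUP r\<in>{r\<in>Nh T (N T). bdry_norm T r \<noteq> 0}. bdry_pair T r w / bdry_norm T r)"
proof (intro exI[of _ "1/2"] conjI ballI allI)
  show "(0::real) < 1/2" by simp
  fix T w assume T: "T \<in> F"
  have mesh: "is_mesh \<Omega> T" using assms(5) T unfolding quasi_uniform_family_def by blast
  show "1 / 2 * jump_norm T w \<le>
          (SUP r\<in>{r\<in>Nh T (N T). bdry_norm T r \<noteq> 0}. bdry_pair T r w / bdry_norm T r)"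
    using main_T[OF mesh] assms(6,7) T by blast
qed

end
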